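(* Let $n > 1$ be a square-free positive integer. Then $n$ is $\pi/4$-congruent if and only if $n$ is the square-free part of $rs(r^2+2rs-s^2)$ for some relatively prime positive integers $r,s$. Likewise, $n$ is $3\pi/4$-congruent if and only if $n$ is the square-free part of $rs(r^2-2rs-s^2)$ for some relatively prime positive integers $r,s$.
   Context: For $\theta \in \{\pi/4,3\pi/4\}$, a positive integer $n$ is $\theta$-congruent if there exist positive rationals $a,b,c$ such that the triangle with sides $a$, $b\sqrt2$, $c$ has angle $\theta$ opposite $c$ and area $n$; equivalently $ab = 2n$ and $c^2 = a^2+2b^2-2ab$ (for $\theta = \pi/4$), resp. $c^2 = a^2+2b^2+2ab$ (for $\theta=3\pi/4$). The square-free part of a non-zero integer $N$ is the unique square-free integer $n$ with $N/n$ a square of a rational number. *)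

theory Defs
  imports Complex_Main "HOL-Computational_Algebra.Squarefree"
begin

text \<open>A positive integer n is pi/4-congruent iff there are positive rationals a, b, c
  with a b = 2 n and c^2 = a^2 + 2 b^2 - 2 a b (triangle with sides a, b sqrt 2, c,
  angle pi/4 opposite c, area n).\<close>
definition pi4_congruent :: "nat \<Rightarrow> bool" where
  "pi4_congruent n \<longleftrightarrow> (\<exists>a b c :: rat. a > 0 \<and> b > 0 \<and> c > 0 \<and>
      a * b = 2 * of_nat n \<and> c^2 = a^2 + 2 * b^2 - 2 * a * b)"

definition three_pi4_congruent :: "nat \<Rightarrow> bool" where
  "three_pi4_congruent n \<longleftrightarrow> (\<exists>a b c :: rat. a > 0 \<and> b > 0 \<and> c > 0 \<and>
      a * b = 2 * of_nat n \<and> c^2 = a^2 + 2 * b^2 + 2 * a * b)"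

definition is_squarefree_part :: "int \<Rightarrow> int \<Rightarrow> bool" where
  "is_squarefree_part n N \<longleftrightarrow> N \<noteq> 0 \<and> squarefree n \<and>
      (\<exists>q :: rat. of_int N / of_int n = q^2)"

end

theory Submission
  imports Defs
begin

lemma back_gen:
  fixes n :: nat and r s P :: int and D :: rat
  assumes n0: "n > 0" and r0: "r > 0" and s0: "s > 0"
    and sq: "is_squarefree_part (int n) (r * s * P)"
  shows "\<exists>Q::rat. Q > 0 \<and> P > 0 \<and> of_int (r*s*P) = of_nat n * Q^2"
proof -
  from sq obtain q :: rat where N0: "r*s*P \<noteq> 0" and hq: "of_int (r*s*P) / of_int (int n) = q^2"
    unfolding is_squarefree_part_def by auto
  have hn: "(of_int (r*s*P)::rat) = of_nat n * q^2" using hq n0 by (simp add: field_simps)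
  have nz: "(of_int (r*s*P)::rat) \<noteq> 0" using N0 by simp
  have "(of_int (r*s*P)::rat) \<ge> 0" using hn by simp
  hence "(of_int (r*s*P)::rat) > 0" using nz by linarith
  hence "r*s*P > 0" by (simp only: of_int_0_less_iff)
  moreover have "r*s > 0" using r0 s0 by simp
  ultimately have P0: "P > 0" by (simp add: zero_less_mult_iff)
  have q0: "q \<noteq> 0" using hn nz by auto
  show ?thesis
    by (rule exI[of _ "\<bar>q\<bar>"]) (use q0 P0 hn in auto)
qed

lemma back1:
  fixes n :: nat and r s :: int
  assumes n0: "n > 0" and r0: "r > 0" and s0: "s > 0"
    and sq: "is_squarefree_part (int n) (r * s * (r^2 + 2*r*s - s^2))"
  shows "pi4_congruent n"
proof -
  define P where "P = r^2 + 2*r*s - s^2"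
  obtain Q :: rat where Q0: "Q > 0" and P0: "P > 0" and hn: "of_int (r*s*P) = of_nat n * Q^2"
    using back_gen[OF n0 r0 s0, of P] sq unfolding P_def by blast
  define a where "a = of_int P / Q"
  define b where "b = 2 * of_int r * of_int s / Q"
  define c where "c = (of_int r ^ 2 + of_int s ^ 2) / Q"
  have "a > 0" unfolding a_def using P0 Q0 by simp
  moreover have "b > 0" unfolding b_def using r0 s0 Q0 by simp
  moreover have "c > 0" unfolding c_def using r0 Q0
    by (simp add: add_pos_nonneg)
  moreover have "a * b = 2 * of_nat n"
  proof -
    have "a * b = 2 * of_int (r*s*P) / Q^2" unfolding a_def b_def
      by (simp add: field_simps power2_eq_square)
    also have "\<dots> = 2 * of_nat n" using hn Q0 by simp
    finally show ?thesis .
  qed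
  moreover have "c^2 = a^2 + 2 * b^2 - 2 * a * b"
    unfolding a_def b_def c_def P_def using Q0
    by (simp add: field_simps power2_eq_square)
  ultimately show ?thesis unfolding pi4_congruent_def by blast
qed

lemma back2:
  fixes n :: nat and r s :: int
  assumes n0: "n > 0" and r0: "r > 0" and s0: "s > 0"
    and sq: "is_squarefree_part (int n) (r * s * (r^2 - 2*r*s - s^2))"
  shows "three_pi4_congruent n"
proof -
  define P where "P = r^2 - 2*r*s - s^2"
  obtain Q :: rat where Q0: "Q > 0" and P0: "P > 0" and hn: "of_int (r*s*P) = of_nat n * Q^2"
    using back_gen[OF n0 r0 s0, of P] sq unfolding P_def by blast
  define a where "a = of_int P / Q"
  define b where "b = 2 * of_int r * of_int s / Q"
  define c where "c = (of_int r ^ 2 + of_int s ^ 2) / Q"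
  have "a > 0" unfolding a_def using P0 Q0 by simp
  moreover have "b > 0" unfolding b_def using r0 s0 Q0 by simp
  moreover have "c > 0" unfolding c_def using r0 Q0
    by (simp add: add_pos_nonneg)
  moreover have "a * b = 2 * of_nat n"
  proof -
    have "a * b = 2 * of_int (r*s*P) / Q^2" unfolding a_def b_def
      by (simp add: field_simps power2_eq_square)
    also have "\<dots> = 2 * of_nat n" using hn Q0 by simp
    finally show ?thesis .
  qed
  moreover have "c^2 = a^2 + 2 * b^2 + 2 * a * b"
    unfolding a_def b_def c_def P_def using Q0
    by (simp add: field_simps power2_eq_square)
  ultimately show ?thesis unfolding three_pi4_congruent_def by blast
qed


lemma fwd_gen:
  fixes n :: nat and a b c u :: rat and F :: "int \<Rightarrow> int \<Rightarrow> int"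
  assumes n0: "n > 0" and u0: "u > 0" and b0: "b > 0" and sqf: "squarefree (int n)"
    and ab: "a * b = 2 * of_nat n"
    and hF: "\<And>r s. of_int s = of_int r * b / u \<Longrightarrow>
               (of_int (F r s)::rat) = 2 * a * b * of_int r ^ 4 / u^2"
  shows "\<exists>r s :: int. r > 0 \<and> s > 0 \<and> coprime r s \<and> is_squarefree_part (int n) (F r s)"
proof -
  obtain s r where qo: "quotient_of (b/u) = (s, r)" by (cases "quotient_of (b/u)") auto
  have e: "b/u = of_int s / of_int r" using quotient_of_div[OF qo] .
  have r0: "r > 0" using quotient_of_denom_pos[OF qo] .
  have cp: "coprime s r" using quotient_of_coprime[OF qo] .
  have "of_int s / of_int r > (0::rat)" using e u0 b0 by (metis divide_pos_pos)
  hence s0: "s > 0" using r0 by (simp add: zero_less_divide_iff)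
  have es: "(of_int s::rat) = of_int r * b / u" using e r0 by (simp add: field_simps)
  have hN: "(of_int (F r s)::rat) = 4 * of_nat n * of_int r ^ 4 / u^2"
    using hF[OF es] ab by simp
  show ?thesis
  proof (intro exI conjI)
    show "r > 0" "s > 0" by fact+
    show "coprime r s" using cp by (simp add: coprime_commute)
    show "is_squarefree_part (int n) (F r s)"
      unfolding is_squarefree_part_def
    proof (intro conjI exI)
      have "(of_int (F r s)::rat) \<noteq> 0" using hN n0 r0 u0 by simp
      thus "F r s \<noteq> 0" by auto
      show "squarefree (int n)" by fact
      show "of_int (F r s) / of_int (int n) = (2 * of_int r ^ 2 / u :: rat)^2"
        using hN n0 u0 by (simp add: field_simps power2_eq_square power4_eq_xxxx)
    qed
  qed
qed

lemma fwd1: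
  fixes n :: nat
  assumes n0: "n > 0" and sqf: "squarefree (int n)" and pc: "pi4_congruent n"
  shows "\<exists>r s :: int. r > 0 \<and> s > 0 \<and> coprime r s \<and>
               is_squarefree_part (int n) (r * s * (r^2 + 2*r*s - s^2))"
proof -
  obtain a b c :: rat where a0: "a > 0" and b0: "b > 0" and c0: "c > 0"
    and ab: "a * b = 2 * of_nat n" and cc: "c^2 = a^2 + 2 * b^2 - 2 * a * b"
    using pc unfolding pi4_congruent_def by blast
  define u where "u = c + a - b"
  have "(b - a)^2 < c^2" using cc b0 by (simp add: power2_eq_square algebra_simps)
  hence "b - a < c" using c0 by (meson power2_less_imp_less less_imp_le)
  hence u0: "u > 0" unfolding u_def by simp
  have key: "u^2 + 2*u*b - b^2 = 2*a*u" unfolding u_def using cc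
    by (simp add: power2_eq_square algebra_simps)
  show ?thesis
  proof (rule fwd_gen[OF n0 u0 b0 sqf ab])
    fix r s :: int
    assume es: "(of_int s::rat) = of_int r * b / u"
    have "(of_int (r * s * (r^2 + 2*r*s - s^2))::rat)
        = of_int r ^ 4 * b * (u^2 + 2*u*b - b^2) / u^3"
      using u0 by (simp add: es field_simps power2_eq_square power3_eq_cube)
        (simp add: algebra_simps power4_eq_xxxx)
    also have "\<dots> = of_int r ^ 4 * b * (2*a*u) / u^3" by (simp only: key)
    also have "\<dots> = 2 * a * b * of_int r ^ 4 / u^2" using u0
      by (simp add: power2_eq_square power3_eq_cube field_simps)
    finally show "(of_int (r * s * (r^2 + 2*r*s - s^2))::rat) = 2 * a * b * of_int r ^ 4 / u^2" .
  qed
qed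

lemma fwd2:
  fixes n :: nat
  assumes n0: "n > 0" and sqf: "squarefree (int n)" and pc: "three_pi4_congruent n"
  shows "\<exists>r s :: int. r > 0 \<and> s > 0 \<and> coprime r s \<and>
               is_squarefree_part (int n) (r * s * (r^2 - 2*r*s - s^2))"
proof -
  obtain a b c :: rat where a0: "a > 0" and b0: "b > 0" and c0: "c > 0"
    and ab: "a * b = 2 * of_nat n" and cc: "c^2 = a^2 + 2 * b^2 + 2 * a * b"
    using pc unfolding three_pi4_congruent_def by blast
  define u where "u = c + a + b"
  have u0: "u > 0" unfolding u_def using a0 b0 c0 by simp
  have key: "u^2 - 2*u*b - b^2 = 2*a*u" unfolding u_def using cc
    by (simp add: power2_eq_square algebra_simps)
  show ?thesis
  proof (rule fwd_gen[OF n0 u0 b0 sqf ab])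
    fix r s :: int
    assume es: "(of_int s::rat) = of_int r * b / u"
    have "(of_int (r * s * (r^2 - 2*r*s - s^2))::rat)
        = of_int r ^ 4 * b * (u^2 - 2*u*b - b^2) / u^3"
      using u0 by (simp add: es field_simps power2_eq_square power3_eq_cube)
        (simp add: algebra_simps power4_eq_xxxx)
    also have "\<dots> = of_int r ^ 4 * b * (2*a*u) / u^3" by (simp only: key)
    also have "\<dots> = 2 * a * b * of_int r ^ 4 / u^2" using u0
      by (simp add: power2_eq_square power3_eq_cube field_simps)
    finally show "(of_int (r * s * (r^2 - 2*r*s - s^2))::rat) = 2 * a * b * of_int r ^ 4 / u^2" .
  qed
qed

theorem proposition5p1:
  fixes n :: nat
  assumes "n > 1" and "squarefree n"
  shows "(pi4_congruent n \<longleftrightarrow>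
            (\<exists>r s :: int. r > 0 \<and> s > 0 \<and> coprime r s \<and>
               is_squarefree_part (int n) (r * s * (r^2 + 2*r*s - s^2)))) \<and>
         (three_pi4_congruent n \<longleftrightarrow>
            (\<exists>r s :: int. r > 0 \<and> s > 0 \<and> coprime r s \<and>
               is_squarefree_part (int n) (r * s * (r^2 - 2*r*s - s^2))))"
proof -
  have n0: "n > 0" using assms(1) by simp
  have sqf: "squarefree (int n)"
  proof (rule squarefreeI)
    fix x :: int assume h: "x ^ 2 dvd int n"
    have e: "int (nat \<bar>x\<bar> ^ 2) = \<bar>x ^ 2\<bar>" by (simp add: power_abs)
    have "int (nat \<bar>x\<bar> ^ 2) dvd int n" unfolding e abs_dvd_iff by (rule h)
    hence "nat \<bar>x\<bar> ^ 2 dvd n" by (simp only: int_dvd_int_iff)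
    hence "nat \<bar>x\<bar> dvd 1" by (rule squarefreeD[OF assms(2)])
    hence "\<bar>x\<bar> = 1" by simp
    thus "x dvd 1" by (metis abs_dvd_iff dvd_refl)
  qed
  show ?thesis using fwd1[OF n0 sqf] fwd2[OF n0 sqf] back1[OF n0] back2[OF n0] by blast
qed

end
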